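(* If $D\in\mathcal{H}^2$ is cyclic, then $D$ has a nonzero constant term and no zeros in $\mathbb{C}_\sigma$, where $\sigma=\max\{\sigma_a(D),0\}$.
   Context: $\mathcal{H}^2$ is the Hilbert space of Dirichlet series $D=\sum_{n\ge1}a_nn^{-s}$ with $\sum|a_n|^2<\infty$; the constant term is $a_1$. $\mathbb{C}_\sigma=\{s:\mathrm{Re}\,s>\sigma\}$. $\sigma_a(D)\in[-\infty,\infty]$ is the abscissa of absolute convergence of $D$ (the series converges absolutely for $\mathrm{Re}\,s>\sigma_a(D)$ and not for $\mathrm{Re}\,s<\sigma_a(D)$); for $D\in\mathcal{H}^2$, $\sigma_a(D)\le\frac12$. $\mathcal{H}^\infty$ is the set of Dirichlet series extending to bounded holomorphic functions on $\mathbb{C}_0$ (the multiplier algebra of $\mathcal{H}^2$), and $D$ is cyclic if $\{hD:h\in\mathcal{H}^\infty\}$ is dense in $\mathcal{H}^2$. *)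

theory Defs
  imports "HOL-Analysis.Analysis"
begin

text \<open>A Dirichlet series \<open>\<Sum>n\<ge>1. a n * n^(-s)\<close> is represented by its coefficient
  function \<open>a :: nat \<Rightarrow> complex\<close>, with the convention \<open>a 0 = 0\<close>.
  The constant term is \<open>a 1\<close>.\<close>

definition dirichlet_eval :: "(nat \<Rightarrow> complex) \<Rightarrow> complex \<Rightarrow> complex" where
  "dirichlet_eval a s = (\<Sum>n. a n * (of_nat n) powr (- s))"

definition H2 :: "(nat \<Rightarrow> complex) \<Rightarrow> bool" where
  "H2 a \<longleftrightarrow> a 0 = 0 \<and> summable (\<lambda>n. (cmod (a n))\<^sup>2)"

definition abscissa_abs :: "(nat \<Rightarrow> complex) \<Rightarrow> ereal" where
  "abscissa_abs a = Inf {ereal \<sigma> | \<sigma>. summable (\<lambda>n. cmod (a n) * real n powr (- \<sigma>))}"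

definition Hinf :: "(nat \<Rightarrow> complex) \<Rightarrow> bool" where
  "Hinf b \<longleftrightarrow> b 0 = 0 \<and>
     (\<exists>F. F holomorphic_on {s. Re s > 0} \<and> bounded (F ` {s. Re s > 0}) \<and>
        (\<exists>\<sigma>::real. \<forall>s. Re s > \<sigma> \<longrightarrow>
            summable (\<lambda>n. cmod (b n * (of_nat n) powr (- s))) \<and> F s = dirichlet_eval b s))"

definition dconv :: "(nat \<Rightarrow> complex) \<Rightarrow> (nat \<Rightarrow> complex) \<Rightarrow> nat \<Rightarrow> complex" where
  "dconv b a n = (if n = 0 then 0 else (\<Sum>d\<in>{d. d dvd n}. b d * a (n div d)))"

definition cyclic_H2 :: "(nat \<Rightarrow> complex) \<Rightarrow> bool" where
  "cyclic_H2 a \<longleftrightarrow> H2 a \<and>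
     (\<forall>f. H2 f \<longrightarrow> (\<forall>\<epsilon>>0. \<exists>b. Hinf b \<and>
        summable (\<lambda>n. (cmod (f n - dconv b a n))\<^sup>2) \<and>
        (\<Sum>n. (cmod (f n - dconv b a n))\<^sup>2) < \<epsilon>))"

end

theory Submission
  imports Defs "HOL-Complex_Analysis.Complex_Analysis"
begin

lemma npow_norm: "norm (of_nat n powr (-s) :: complex) = real n powr (- Re s)"
proof (cases "n = 0")
  case True then show ?thesis by simp
next
  case False
  have "norm (of_nat n powr (-s) :: complex) = Re (of_nat n) powr Re (-s)"
    by (rule norm_powr_real_powr) auto
  then show ?thesis by simp
qed

lemma npow_exp: "0 < n \<Longrightarrow> (of_nat n powr s :: complex) = exp (s * of_real (ln (real n)))"
  by (simp add: powr_def Ln_of_nat mult.commute)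

lemma npow_mult: "(of_nat (m * k) powr s :: complex) = of_nat m powr s * of_nat k powr s"
proof (cases "m = 0 \<or> k = 0")
  case True then show ?thesis by auto
next
  case False
  then have "0 < m" "0 < k" "0 < m * k" by auto
  have "ln (real (m * k)) = ln (real m) + ln (real k)"
    using \<open>0 < m\<close> \<open>0 < k\<close> by (simp add: ln_mult)
  then show ?thesis
    using \<open>0 < m\<close> \<open>0 < k\<close> \<open>0 < m * k\<close>
    by (simp only: npow_exp distrib_left exp_add of_real_add)
qed

lemma rpow_mono_nat: "\<sigma> \<le> t \<Longrightarrow> real n powr (- t) \<le> real n powr (- \<sigma>)"
  by (cases "n = 0") (auto intro: powr_mono)

lemma dir_summable_mono:
  assumes "summable (\<lambda>n. cmod (a n) * real n powr (-\<sigma>))" "\<sigma> \<le> Re s"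
  shows "summable (\<lambda>n. cmod (a n * of_nat n powr (-s)))"
proof (rule summable_comparison_test'[OF assms(1)])
  fix n :: nat
  show "norm (cmod (a n * of_nat n powr (-s))) \<le> cmod (a n) * real n powr (-\<sigma>)"
    using rpow_mono_nat[OF assms(2), of n] by (simp add: norm_mult npow_norm mult_left_mono)
qed

lemma dir_uniform:
  assumes "summable (\<lambda>n. cmod (a n) * real n powr (-\<sigma>))"
  shows "uniform_limit {s. \<sigma> \<le> Re s} (\<lambda>k s. \<Sum>i<k. a i * of_nat i powr (-s)) (dirichlet_eval a) sequentially"
  unfolding dirichlet_eval_def
proof (rule Weierstrass_m_test_ev[OF _ assms])
  show "\<forall>\<^sub>F n in sequentially. \<forall>x\<in>{s. \<sigma> \<le> Re s}. norm (a n * of_nat n powr - x) \<le> cmod (a n) * real n powr - \<sigma>"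
    using rpow_mono_nat by (auto simp: norm_mult npow_norm mult_left_mono)
qed

lemma dir_holo:
  assumes "summable (\<lambda>n. cmod (a n) * real n powr (-\<sigma>))"
  shows "dirichlet_eval a holomorphic_on {s. \<sigma> < Re s}"
proof (rule holomorphic_uniform_sequence[where f = "\<lambda>k s. \<Sum>i<k. a i * of_nat i powr (-s)"])
  show "open {s. \<sigma> < Re s}" by (simp add: open_halfspace_Re_gt)
  show "(\<lambda>s. \<Sum>i<k. a i * of_nat i powr (-s)) holomorphic_on {s. \<sigma> < Re s}" for k
    by (intro holomorphic_intros holomorphic_on_powr_right)
  fix x assume x: "x \<in> {s. \<sigma> < Re s}"
  define d where "d = (Re x - \<sigma>) / 2"
  have d: "0 < d" using x by (simp add: d_def)
  have sub: "cball x d \<subseteq> {s. \<sigma> + d \<le> Re s}"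
  proof
    fix z assume "z \<in> cball x d"
    then have "cmod (x - z) \<le> d" by (simp add: dist_norm)
    then have "\<bar>Re (x - z)\<bar> \<le> d" using abs_Re_le_cmod order_trans by blast
    then have "Re x - Re z \<le> d" by simp
    then show "z \<in> {s. \<sigma> + d \<le> Re s}" using x unfolding d_def by (simp add: field_simps)
  qed
  have "uniform_limit {s. \<sigma> + d \<le> Re s} (\<lambda>k s. \<Sum>i<k. a i * of_nat i powr (-s)) (dirichlet_eval a) sequentially"
  proof (rule dir_uniform, rule summable_comparison_test'[OF assms])
    fix n :: nat
    have "real n powr (- (\<sigma> + d)) \<le> real n powr (- \<sigma>)" using rpow_mono_nat[of \<sigma> "\<sigma> + d" n] d by simp
    then show "norm (cmod (a n) * real n powr (- (\<sigma> + d))) \<le> cmod (a n) * real n powr (- \<sigma>)"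
      by (simp add: mult_left_mono)
  qed
  then have "uniform_limit (cball x d) (\<lambda>k s. \<Sum>i<k. a i * of_nat i powr (-s)) (dirichlet_eval a) sequentially"
    using sub uniform_limit_on_subset by blast
  moreover have "cball x d \<subseteq> {s. \<sigma> < Re s}" using sub d by auto
  ultimately show "\<exists>d>0. cball x d \<subseteq> {s. \<sigma> < Re s} \<and> uniform_limit (cball x d) (\<lambda>k s. \<Sum>i<k. a i * of_nat i powr (-s)) (dirichlet_eval a) sequentially"
    using d by blast
qed


definition smooth :: "nat \<Rightarrow> nat set" where
  "smooth N = {n. 0 < n \<and> (\<forall>p. prime p \<longrightarrow> p dvd n \<longrightarrow> p \<le> N)}"

definition msk :: "nat \<Rightarrow> (nat \<Rightarrow> complex) \<Rightarrow> nat \<Rightarrow> complex" where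
  "msk N a n = (if n \<in> smooth N then a n else 0)"

lemma smooth_mult: "m \<in> smooth N \<Longrightarrow> k \<in> smooth N \<Longrightarrow> m * k \<in> smooth N"
  unfolding smooth_def by (auto simp: prime_dvd_mult_iff)

lemma smooth_dvd: "n \<in> smooth N \<Longrightarrow> d dvd n \<Longrightarrow> d \<in> smooth N"
  unfolding smooth_def by (auto intro: dvd_trans)

lemma smooth_le: "0 < n \<Longrightarrow> n \<le> N \<Longrightarrow> n \<in> smooth N"
  unfolding smooth_def by (auto dest: dvd_imp_le)

lemma one_smooth: "1 \<in> smooth N"
  unfolding smooth_def by auto

lemma smooth_factor:
  assumes n: "n \<in> smooth N"
  shows "real n powr (- y) = (\<Prod>p\<in>{p. prime p \<and> p \<le> N}. (real p powr (- y)) ^ multiplicity p n)"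
proof -
  let ?P = "{p. prime p \<and> p \<le> N}"
  have n0: "n \<noteq> 0" using n by (simp add: smooth_def)
  have sub: "prime_factors n \<subseteq> ?P"
    using n by (auto simp: smooth_def prime_factors_dvd)
  have "n = (\<Prod>p\<in>prime_factors n. p ^ multiplicity p n)"
    using prod_prime_factors[OF n0] by simp
  also have "\<dots> = (\<Prod>p\<in>?P. p ^ multiplicity p n)"
  proof (rule prod.mono_neutral_left)
    show "finite ?P" by simp
    show "prime_factors n \<subseteq> ?P" by (rule sub)
    show "\<forall>i\<in>?P - prime_factors n. i ^ multiplicity i n = 1"
      using n0 by (auto simp: prime_factors_multiplicity)
  qed
  finally have "real n = real (\<Prod>p\<in>?P. p ^ multiplicity p n)" by (rule arg_cong)
  then have "real n = (\<Prod>p\<in>?P. real p ^ multiplicity p n)"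
    by (simp only: of_nat_prod of_nat_power)
  then have "real n powr (- y) = (\<Prod>p\<in>?P. real p ^ multiplicity p n) powr (- y)" by simp
  also have "\<dots> = (\<Prod>p\<in>?P. (real p ^ multiplicity p n) powr (- y))"
    by (rule prod_powr_distrib)
  also have "\<dots> = (\<Prod>p\<in>?P. (real p powr (- y)) ^ multiplicity p n)"
  proof (rule prod.cong[OF refl])
    fix p assume "p \<in> ?P"
    then have "0 < real p" by (auto simp: prime_gt_0_nat)
    have e1: "real p ^ multiplicity p n = real p powr (real (multiplicity p n))"
      using \<open>0 < real p\<close> by (simp add: powr_realpow)
    have e2: "(real p powr (- y)) ^ multiplicity p n = real p powr (real (multiplicity p n) * (- y))"
      using \<open>0 < real p\<close> by (simp only: powr_power)
    show "(real p ^ multiplicity p n) powr (- y) = (real p powr (- y)) ^ multiplicity p n"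
      unfolding e1 e2 by (simp add: powr_powr)
  qed
  finally show ?thesis .
qed

lemma smooth_inj:
  assumes "n \<in> smooth N" "m \<in> smooth N"
    and "\<And>p. prime p \<Longrightarrow> p \<le> N \<Longrightarrow> multiplicity p n = multiplicity p m"
  shows "n = m"
proof (rule multiplicity_eq_nat)
  show "n > 0" "m > 0" using assms by (auto simp: smooth_def)
  fix p :: nat assume p: "prime p"
  show "multiplicity p n = multiplicity p m"
  proof (cases "p \<le> N")
    case True then show ?thesis using assms p by auto
  next
    case False
    then have "\<not> p dvd n" "\<not> p dvd m" using assms p by (auto simp: smooth_def)
    then show ?thesis by (simp add: not_dvd_imp_multiplicity_0)
  qed
qed

lemma smooth_sum_bound:
  assumes y: "0 < y" and A: "finite A" "A \<subseteq> smooth N"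
  shows "(\<Sum>n\<in>A. real n powr (- y)) \<le> (\<Prod>p\<in>{p. prime p \<and> p \<le> N}. 1 / (1 - real p powr (- y)))"
proof -
  let ?P = "{p. prime p \<and> p \<le> N}"
  obtain K where K: "\<And>n. n \<in> A \<Longrightarrow> n < K"
    using A(1) by (metis finite_nat_bounded lessThan_iff subsetD)
  define v where "v n = restrict (\<lambda>p. multiplicity p n) ?P" for n
  define h where "h f = (\<Prod>p\<in>?P. (real p powr (- y)) ^ f p)" for f
  have mult_lt: "multiplicity p n < K" if "n \<in> A" "p \<in> ?P" for n p
  proof -
    have n0: "n \<noteq> 0" using that A by (auto simp: smooth_def)
    have p2: "2 \<le> p" using that by (auto simp: prime_ge_2_nat)
    have "p ^ multiplicity p n dvd n" by (rule multiplicity_dvd)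
    then have "p ^ multiplicity p n \<le> n" using n0 by (auto intro: dvd_imp_le)
    moreover have "multiplicity p n < 2 ^ multiplicity p n" by (rule less_exp)
    moreover have "(2::nat) ^ multiplicity p n \<le> p ^ multiplicity p n" using p2 by (rule power_mono) auto
    ultimately show ?thesis using K[OF that(1)] by linarith
  qed
  have inj: "inj_on v A"
  proof (rule inj_onI)
    fix n m assume "n \<in> A" "m \<in> A" "v n = v m"
    then show "n = m"
    proof (intro smooth_inj[of n N m])
      show "n \<in> smooth N" "m \<in> smooth N" using \<open>n \<in> A\<close> \<open>m \<in> A\<close> A by auto
      fix p assume "prime p" "p \<le> N"
      then have "v n p = multiplicity p n" "v m p = multiplicity p m" by (auto simp: v_def)
      then show "multiplicity p n = multiplicity p m" using \<open>v n = v m\<close> by simp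
    qed
  qed
  have img: "v ` A \<subseteq> PiE ?P (\<lambda>_. {..<K})"
  proof
    fix f assume "f \<in> v ` A"
    then obtain n where "n \<in> A" "f = v n" by blast
    moreover have "v n \<in> PiE ?P (\<lambda>_. {..<K})"
      unfolding v_def restrict_PiE_iff using mult_lt \<open>n \<in> A\<close> by blast
    ultimately show "f \<in> PiE ?P (\<lambda>_. {..<K})" by simp
  qed
  have "(\<Sum>n\<in>A. real n powr (- y)) = (\<Sum>n\<in>A. h (v n))"
    using A by (intro sum.cong refl) (auto simp: h_def v_def smooth_factor)
  also have "\<dots> = (\<Sum>f\<in>v ` A. h f)"
    using sum.reindex[OF inj, of h] by (simp add: o_def)
  also have "\<dots> \<le> (\<Sum>f\<in>PiE ?P (\<lambda>_. {..<K}). h f)"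
    by (rule sum_mono2[OF _ img]) (auto simp: h_def finite_PiE intro!: prod_nonneg)
  also have "\<dots> = (\<Prod>p\<in>?P. \<Sum>j<K. (real p powr (- y)) ^ j)"
    unfolding h_def by (rule prod_sum_PiE[symmetric]) auto
  also have "\<dots> \<le> (\<Prod>p\<in>?P. 1 / (1 - real p powr (- y)))"
  proof (rule prod_mono, safe)
    fix p assume p: "prime p" "p \<le> N"
    have p1: "1 < real p" using prime_gt_1_nat[OF p(1)] by simp
    define q where "q = real p powr (- y)"
    have q0: "0 \<le> q" by (simp add: q_def)
    have q1: "q < 1" unfolding q_def using p1 y by (simp add: powr_less_one)
    show "0 \<le> (\<Sum>j<K. (real p powr (- y)) ^ j)" by (auto intro!: sum_nonneg)
    have "(\<Sum>j<K. q ^ j) = (1 - q ^ K) / (1 - q)"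
      using q1 by (simp add: sum_gp_strict)
    also have "\<dots> \<le> 1 / (1 - q)"
      using q0 q1 by (simp add: divide_right_mono)
    finally show "(\<Sum>j<K. (real p powr (- y)) ^ j) \<le> 1 / (1 - real p powr (- y))"
      by (simp add: q_def)
  qed
  finally show ?thesis .
qed

lemma smooth_summable:
  assumes y: "0 < y"
  shows "summable (\<lambda>n. if n \<in> smooth N then real n powr (- y) else 0)"
proof (rule summableI_nonneg_bounded)
  show "0 \<le> (if n \<in> smooth N then real n powr (- y) else 0)" for n by simp
  fix k
  have "(\<Sum>n<k. if n \<in> smooth N then real n powr (- y) else 0) = (\<Sum>n\<in>{..<k} \<inter> smooth N. real n powr (- y))"
    by (simp add: sum.inter_restrict)
  also have "\<dots> \<le> (\<Prod>p\<in>{p. prime p \<and> p \<le> N}. 1 / (1 - real p powr (- y)))"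
    by (rule smooth_sum_bound[OF y]) auto
  finally show "(\<Sum>n<k. if n \<in> smooth N then real n powr (- y) else 0) \<le> (\<Prod>p\<in>{p. prime p \<and> p \<le> N}. 1 / (1 - real p powr (- y)))" .
qed


lemma dconv_msk: "msk N (dconv b a) = dconv (msk N b) (msk N a)"
proof
  fix n
  show "msk N (dconv b a) n = dconv (msk N b) (msk N a) n"
  proof (cases "n \<in> smooth N")
    case True
    then have n0: "n \<noteq> 0" by (auto simp: smooth_def)
    have "dconv (msk N b) (msk N a) n = (\<Sum>d\<in>{d. d dvd n}. msk N b d * msk N a (n div d))"
      using n0 by (simp add: dconv_def)
    also have "\<dots> = (\<Sum>d\<in>{d. d dvd n}. b d * a (n div d))"
    proof (rule sum.cong[OF refl])
      fix d assume "d \<in> {d. d dvd n}"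
      then have "d \<in> smooth N" "n div d \<in> smooth N"
        using True smooth_dvd by (auto intro: dvd_div_iff_mult[THEN iffD2])
      then show "msk N b d * msk N a (n div d) = b d * a (n div d)" by (simp add: msk_def)
    qed
    finally show ?thesis using True n0 by (simp add: msk_def dconv_def)
  next
    case False
    have *: "msk N b d * msk N a (n div d) = 0" if "d dvd n" "n \<noteq> 0" for d
    proof (rule ccontr)
      assume "msk N b d * msk N a (n div d) \<noteq> 0"
      then have "d \<in> smooth N" "n div d \<in> smooth N" by (auto simp: msk_def split: if_splits)
      then have "d * (n div d) \<in> smooth N" by (rule smooth_mult)
      then show False using False that by simp
    qed
    have "dconv (msk N b) (msk N a) n = 0" by (simp add: dconv_def *)
    moreover have "msk N (dconv b a) n = 0" by (simp add: msk_def False)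
    ultimately show ?thesis by simp
  qed
qed

lemma dir_mult:
  fixes u v :: "nat \<Rightarrow> complex"
  assumes u0: "u 0 = 0" and v0: "v 0 = 0"
    and su: "summable (\<lambda>n. cmod (u n * of_nat n powr (-s)))"
    and sv: "summable (\<lambda>n. cmod (v n * of_nat n powr (-s)))"
  shows "summable (\<lambda>n. cmod (dconv u v n * of_nat n powr (-s)))"
    and "dirichlet_eval (dconv u v) s = dirichlet_eval u s * dirichlet_eval v s"
proof -
  define U where "U n = u n * of_nat n powr (-s)" for n
  define V where "V n = v n * of_nat n powr (-s)" for n
  define W where "W = (\<lambda>(d, k). U d * V k)"
  have sU: "summable (\<lambda>n. norm (U n))" and sV: "summable (\<lambda>n. norm (V n))"
    using su sv by (simp_all add: U_def V_def)
  have hU: "(U has_sum dirichlet_eval u s) UNIV"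
    unfolding dirichlet_eval_def U_def[symmetric]
    by (rule norm_summable_imp_has_sum[OF sU]) (use sU summable_norm_cancel in \<open>blast intro: summable_sums\<close>)
  have hV: "(V has_sum dirichlet_eval v s) UNIV"
    unfolding dirichlet_eval_def V_def[symmetric]
    by (rule norm_summable_imp_has_sum[OF sV]) (use sV summable_norm_cancel in \<open>blast intro: summable_sums\<close>)
  have aU: "(\<lambda>x. norm (U x)) summable_on UNIV"
    by (rule norm_summable_imp_summable_on) (use sU in simp)
  have aV: "(\<lambda>x. norm (V x)) summable_on UNIV"
    by (rule norm_summable_imp_summable_on) (use sV in simp)
  have aW: "(\<lambda>x. norm (W x)) summable_on UNIV \<times> UNIV"
  proof (rule Infinite_Sum.abs_summable_on_Sigma_iff[THEN iffD2], intro conjI ballI)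
    fix d :: nat
    show "(\<lambda>k. norm (W (d, k))) summable_on UNIV"
      using summable_on_cmult_right[OF aV, of "norm (U d)"] by (simp add: W_def norm_mult)
  next
    have eq: "infsum (\<lambda>k. norm (W (d, k))) UNIV = norm (U d) * infsum (\<lambda>k. norm (V k)) UNIV" for d
      by (auto simp: W_def norm_mult infsum_cmult_right aV)
    have *: "(\<lambda>d. norm (norm (U d) * infsum (\<lambda>k. norm (V k)) UNIV)) summable_on UNIV"
      using summable_on_cmult_left[OF aU, of "infsum (\<lambda>k. norm (V k)) UNIV"]
      by (simp add: norm_mult infsum_nonneg)
    show "(\<lambda>d. norm (infsum (\<lambda>k. norm (W (d, k))) UNIV)) summable_on UNIV" using * by (simp only: eq)
  qed
  have sW: "W summable_on UNIV \<times> UNIV" by (rule abs_summable_summable[OF aW])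
  have "infsum W (UNIV \<times> UNIV) = infsum (\<lambda>d. infsum (\<lambda>k. W (d, k)) UNIV) UNIV"
    using infsum_Sigma_banach[of W UNIV "\<lambda>_. UNIV"] sW by simp
  also have "\<dots> = infsum (\<lambda>d. U d * dirichlet_eval v s) UNIV"
    using hV abs_summable_summable[OF aV] by (simp add: W_def infsum_cmult_right infsumI)
  also have "\<dots> = dirichlet_eval u s * dirichlet_eval v s"
    using hU abs_summable_summable[OF aU] by (simp add: infsum_cmult_left infsumI)
  finally have hW: "(W has_sum (dirichlet_eval u s * dirichlet_eval v s)) (UNIV \<times> UNIV)"
    using sW by (metis has_sum_infsum)
  define B0 where "B0 = {(d, k). 0 < (d::nat) \<and> 0 < (k::nat)}"
  have W0: "W x = 0" if "x \<notin> B0" for x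
    using that u0 v0 by (cases x) (auto simp: B0_def W_def U_def V_def)
  have hW0: "(W has_sum (dirichlet_eval u s * dirichlet_eval v s)) B0"
    using hW by (subst has_sum_cong_neutral[where T = "UNIV \<times> UNIV"]) (auto simp: W0)
  have aW0: "(\<lambda>x. norm (W x)) summable_on B0"
    using aW by (rule summable_on_subset_banach) simp
  define Sg where "Sg = Sigma {n::nat. 0 < n} (\<lambda>n. {d. d dvd n})"
  define g where "g = (\<lambda>(n, d). (d, n div (d::nat)))"
  have bij: "bij_betw g Sg B0"
  proof (rule bij_betw_byWitness[where f' = "\<lambda>(d, k). (d * k, d)"])
    show "\<forall>a\<in>Sg. (\<lambda>(d, k). (d * k, d)) (g a) = a"
      by (auto simp: Sg_def g_def)
    show "\<forall>a'\<in>B0. g ((\<lambda>(d, k). (d * k, d)) a') = a'"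
      by (auto simp: B0_def g_def)
    show "g ` Sg \<subseteq> B0"
      by (auto simp: Sg_def g_def B0_def elim!: dvdE)
    show "(\<lambda>(d, k). (d * k, d)) ` B0 \<subseteq> Sg"
      by (auto simp: Sg_def B0_def)
  qed
  have hWg: "((\<lambda>x. W (g x)) has_sum (dirichlet_eval u s * dirichlet_eval v s)) Sg"
    using has_sum_reindex_bij_betw[OF bij] hW0 by blast
  have aWg: "(\<lambda>x. norm (W (g x))) summable_on Sg"
    using summable_on_reindex_bij_betw[OF bij, of "\<lambda>x. norm (W x)"] aW0 by simp
  have inner: "(\<Sum>d\<in>{d. d dvd n}. W (g (n, d))) = dconv u v n * of_nat n powr (-s)" if "0 < n" for n
  proof -
    have "(\<Sum>d\<in>{d. d dvd n}. W (g (n, d))) = (\<Sum>d\<in>{d. d dvd n}. u d * v (n div d) * of_nat n powr (-s))"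
    proof (rule sum.cong[OF refl])
      fix d assume "d \<in> {d. d dvd n}"
      then have "n = d * (n div d)" by simp
      then have "(of_nat n powr (-s) :: complex) = of_nat d powr (-s) * of_nat (n div d) powr (-s)"
        by (metis npow_mult)
      then show "W (g (n, d)) = u d * v (n div d) * of_nat n powr (-s)"
        by (simp add: W_def g_def U_def V_def)
    qed
    also have "\<dots> = dconv u v n * of_nat n powr (-s)"
      using that by (simp add: dconv_def sum_distrib_right)
    finally show ?thesis .
  qed
  have "((\<lambda>n. dconv u v n * of_nat n powr (-s)) has_sum (dirichlet_eval u s * dirichlet_eval v s)) {n. 0 < n}"
  proof (rule has_sum_SigmaD[OF hWg[unfolded Sg_def]])
    fix n :: nat assume "n \<in> {n. 0 < n}"
    then have "0 < n" by simp
    show "((\<lambda>d. W (g (n, d))) has_sum (dconv u v n * of_nat n powr (-s))) {d. d dvd n}"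
      using has_sum_finite[of "{d. d dvd n}" "\<lambda>d. W (g (n, d))"] inner[OF \<open>0 < n\<close>] \<open>0 < n\<close> by simp
  qed
  then have hD: "((\<lambda>n. dconv u v n * of_nat n powr (-s)) has_sum (dirichlet_eval u s * dirichlet_eval v s)) UNIV"
    by (subst has_sum_cong_neutral[where T = "{n. 0 < n}"]) (auto simp: dconv_def)
  have "(\<lambda>n. dconv u v n * of_nat n powr (-s)) sums (dirichlet_eval u s * dirichlet_eval v s)"
    by (rule has_sum_imp_sums[OF hD])
  then show "dirichlet_eval (dconv u v) s = dirichlet_eval u s * dirichlet_eval v s"
    by (simp add: dirichlet_eval_def sums_iff)
  have "(\<lambda>n. norm (infsum (\<lambda>d. norm (W (g (n, d)))) {d. d dvd n})) summable_on {n. 0 < n}"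
    using aWg unfolding Sg_def by (subst (asm) Infinite_Sum.abs_summable_on_Sigma_iff) blast
  then have "(\<lambda>n. norm (dconv u v n * of_nat n powr (-s))) summable_on {n. 0 < n}"
  proof (rule Infinite_Sum.abs_summable_on_comparison_test)
    fix n :: nat assume "n \<in> {n. 0 < n}"
    then have n: "0 < n" by simp
    have "norm (dconv u v n * of_nat n powr (-s)) = norm (\<Sum>d\<in>{d. d dvd n}. W (g (n, d)))"
      using inner[OF n] by simp
    also have "\<dots> \<le> (\<Sum>d\<in>{d. d dvd n}. norm (W (g (n, d))))" by (rule norm_sum)
    also have "\<dots> = infsum (\<lambda>d. norm (W (g (n, d)))) {d. d dvd n}"
      using n by (simp add: infsum_finite)
    also have "\<dots> \<le> norm (infsum (\<lambda>d. norm (W (g (n, d)))) {d. d dvd n})" by simp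
    finally show "norm (dconv u v n * of_nat n powr (-s)) \<le> norm (infsum (\<lambda>d. norm (W (g (n, d)))) {d. d dvd n})" .
  qed
  then have "(\<lambda>n. norm (dconv u v n * of_nat n powr (-s))) summable_on UNIV"
    by (subst summable_on_cong_neutral[where T = "{n. 0 < n}"]) (auto simp: dconv_def)
  then show "summable (\<lambda>n. cmod (dconv u v n * of_nat n powr (-s)))"
    by (subst (asm) summable_on_UNIV_nonneg_real_iff) auto
qed


lemma lam_bound:
  assumes "0 < m" "0 < n" "m \<noteq> n"
  shows "1 / (real n + 1) \<le> \<bar>ln (real n) - ln (real m)\<bar>"
proof (cases "m < n")
  case True
  have "ln (real m / real n) \<le> real m / real n - 1"
    using assms by (intro ln_le_minus_one) auto
  then have "1 - real m / real n \<le> ln (real n) - ln (real m)"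
    using assms by (simp add: ln_div)
  moreover have "1 / (real n + 1) \<le> 1 - real m / real n"
  proof -
    have "real m \<le> real n - 1" using True by linarith
    then have "real m / real n \<le> (real n - 1) / real n" using assms by (simp add: divide_right_mono)
    then have "1 / real n \<le> 1 - real m / real n" using assms by (simp add: diff_divide_distrib)
    moreover have "1 / (real n + 1) \<le> 1 / real n" using assms by (simp add: frac_le)
    ultimately show ?thesis by linarith
  qed
  ultimately show ?thesis by linarith
next
  case False
  then have mn: "n < m" using assms by simp
  have "ln (real n / real m) \<le> real n / real m - 1"
    using assms by (intro ln_le_minus_one) auto
  then have "1 - real n / real m \<le> ln (real m) - ln (real n)"
    using assms by (simp add: ln_div)
  moreover have "1 / (real n + 1) \<le> 1 - real n / real m"
  proof -
    have m1: "real n + 1 \<le> real m" using mn by linarith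
    have "real m \<le> (real m - real n) * (real n + 1)"
    proof -
      have "(real m - real n) * (real n + 1) - real m = real n * (real m - real n - 1)"
        by (simp add: algebra_simps)
      moreover have "0 \<le> real n * (real m - real n - 1)" using m1 by simp
      ultimately show ?thesis by linarith
    qed
    then have "1 / (real n + 1) \<le> (real m - real n) / real m"
      using assms by (simp add: field_simps)
    also have "\<dots> = 1 - real n / real m" using assms by (simp add: field_simps)
    finally show ?thesis .
  qed
  ultimately show ?thesis by linarith
qed

lemma Re_segment_bound:
  assumes "z \<in> closed_segment a b" "lo \<le> Re a" "Re a \<le> hi" "lo \<le> Re b" "Re b \<le> hi"
  shows "lo \<le> Re z \<and> Re z \<le> hi"
proof -
  have "Re z \<in> closed_segment (Re a) (Re b)"
    by (rule in_closed_segment_imp_Re_in_closed_segment[OF assms(1)])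
  then show ?thesis using assms(2-)
    by (cases "Re a \<le> Re b") (auto simp: closed_segment_eq_real_ivl)
qed

lemma norm_exp_real_mult: "norm (exp (z * of_real L)) = exp (Re z * L)"
  by (simp add: norm_exp_eq_Re)


lemma cmod_Complex_0y: "cmod (Complex 0 y) = \<bar>y\<bar>"
  by (simp add: cmod_def)

lemma cmod_Complex_x0: "cmod (Complex x 0) = \<bar>x\<bar>"
  by (simp add: cmod_def)

lemma norm3a: "norm (x + y - z) \<le> norm x + norm y + norm (z::'a::real_normed_vector)"
  using norm_triangle_ineq4[of "x + y" z] norm_triangle_ineq[of x y] by linarith

lemma norm3b: "norm (x - y - z) \<le> norm x + norm y + norm (z::'a::real_normed_vector)"
  using norm_triangle_ineq4[of "x - y" z] norm_triangle_ineq4[of x y] by linarith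

lemma coeff_bound_aux:
  fixes F :: "complex \<Rightarrow> complex" and b :: "nat \<Rightarrow> complex"
  assumes holF: "F holomorphic_on {s. 0 < Re s}"
    and M: "\<And>s. 0 < Re s \<Longrightarrow> norm (F s) \<le> M" and M0: "0 \<le> M"
    and c: "0 < c'" "c' < c"
    and ser: "\<And>s. Re s = c \<Longrightarrow> summable (\<lambda>m. cmod (b m * of_nat m powr (-s))) \<and> F s = dirichlet_eval b s"
    and b0: "b 0 = 0" and n: "0 < n"
  shows "cmod (b n) \<le> M * real n powr c'"
proof -
  define H where "H = {s::complex. 0 < Re s}"
  define L where "L = ln (real n)"
  have L0: "0 \<le> L" using n by (simp add: L_def)
  define \<phi> where "\<phi> s = F s * exp (s * of_real L)" for s
  have hol\<phi>: "\<phi> holomorphic_on H" unfolding \<phi>_def H_def by (intro holomorphic_intros holF)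
  have Hc: "convex H" "open H" unfolding H_def by (simp_all add: convex_halfspace_Re_gt open_halfspace_Re_gt)
  obtain G where G: "\<And>x. x \<in> H \<Longrightarrow> (G has_field_derivative \<phi> x) (at x within H)"
    using holomorphic_convex_primitive'[OF Hc hol\<phi>] by blast
  have cint: "(\<phi> has_contour_integral (G z2 - G z1)) (linepath z1 z2)" if "z1 \<in> H" "z2 \<in> H" for z1 z2
  proof -
    have "(\<phi> has_contour_integral (G (pathfinish (linepath z1 z2)) - G (pathstart (linepath z1 z2)))) (linepath z1 z2)"
      by (rule contour_integral_primitive[OF G]) (use closed_segment_subset[OF that Hc(1)] in auto)
    then show ?thesis by simp
  qed
  have pow: "exp (x * L) = real n powr x" for x using n by (simp add: L_def powr_def)
  have \<phi>bound: "norm (\<phi> z) \<le> M * real n powr hi" if "0 < Re z" "Re z \<le> hi" for z hi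
  proof -
    have "norm (\<phi> z) = norm (F z) * exp (Re z * L)" by (simp add: \<phi>_def norm_mult norm_exp_eq_Re)
    also have "\<dots> \<le> M * exp (hi * L)"
    proof (rule mult_mono)
      show "norm (F z) \<le> M" using M that by simp
      show "exp (Re z * L) \<le> exp (hi * L)" using that L0 by (simp add: mult_right_mono)
    qed (use M0 in auto)
    finally show ?thesis by (simp add: pow)
  qed
  define \<beta> where "\<beta> m = cmod (b m) * real m powr (-c)" for m
  have s\<beta>: "summable \<beta>"
    unfolding \<beta>_def using ser[of "of_real c"] by (simp add: norm_mult npow_norm)
  have \<beta>0: "0 \<le> \<beta> m" for m by (simp add: \<beta>_def)
  define lam where "lam m = L - ln (real m)" for m
  define t where "t m s = b m * exp (s * of_real (lam m))" for m s
  have tnorm: "norm (t m z) = \<beta> m * real n powr c" if "Re z = c" for m z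
  proof (cases "m = 0")
    case True then show ?thesis by (simp add: t_def \<beta>_def b0)
  next
    case False
    have "norm (t m z) = cmod (b m) * exp (c * L - c * ln (real m))"
      using that by (simp add: t_def lam_def norm_mult norm_exp_eq_Re algebra_simps)
    also have "\<dots> = cmod (b m) * (exp (c * L) * exp (- c * ln (real m)))"
      by (simp add: exp_diff exp_minus field_simps)
    also have "\<dots> = \<beta> m * real n powr c"
      using False n by (simp add: \<beta>_def pow[of c, simplified mult.commute] powr_def mult.commute)
    finally show ?thesis .
  qed
  have tsum: "\<phi> z = (\<Sum>m. t m z)" if "Re z = c" for z
  proof -
    have sb: "summable (\<lambda>m. cmod (b m * of_nat m powr (-z)))" and Fz: "F z = dirichlet_eval b z"
      using ser[OF that] by auto
    have "\<phi> z = (\<Sum>m. b m * of_nat m powr (-z)) * exp (z * of_real L)"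
      by (simp add: \<phi>_def Fz dirichlet_eval_def)
    also have "\<dots> = (\<Sum>m. b m * of_nat m powr (-z) * exp (z * of_real L))"
      by (rule suminf_mult2) (rule summable_norm_cancel[OF sb])
    also have "\<dots> = (\<Sum>m. t m z)"
    proof (rule suminf_cong)
      fix m
      show "b m * of_nat m powr (-z) * exp (z * of_real L) = t m z"
      proof (cases "m = 0")
        case True then show ?thesis by (simp add: t_def b0)
      next
        case False
        then have "(of_nat m powr (-z) :: complex) * exp (z * of_real L) = exp (z * of_real (lam m))"
          by (simp add: lam_def npow_exp exp_add[symmetric] algebra_simps)
        then show ?thesis by (simp add: t_def mult.assoc)
      qed
    qed
    finally show ?thesis .
  qed
  define pr where "pr m s = (if lam m = 0 then b m * s else t m s / of_real (lam m))" for m s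
  have prd: "((\<lambda>s. pr m s) has_field_derivative t m s) (at s)" for m s
  proof (cases "lam m = 0")
    case True
    have "((\<lambda>s. b m * s) has_field_derivative b m * 1) (at s)" by (intro DERIV_cmult DERIV_ident)
    then show ?thesis unfolding pr_def t_def using True by simp
  next
    case False
    have "((\<lambda>s. b m * exp (s * of_real (lam m)) / of_real (lam m)) has_field_derivative
        b m * exp (s * of_real (lam m))) (at s)"
      using False by (auto intro!: derivative_eq_intros)
    then show ?thesis unfolding pr_def t_def using False by simp
  qed
  define Sb where "Sb = suminf \<beta>"
  define tail where "tail K = (\<Sum>i. \<beta> (i + K))" for K
  have sshift: "summable (\<lambda>i. \<beta> (i + K))" for K
    using s\<beta> by (simp only: summable_iff_shift)
  have tail0: "0 \<le> tail K" for K
    unfolding tail_def by (rule suminf_nonneg[OF sshift]) (rule \<beta>0)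
  have key: "cmod (b n) * (2 * T) \<le> 2 * T * (M * real n powr c') + 2 * (M * real n powr c * (c - c'))
      + real n powr c * tail K * (2 * T) + 2 * (real n + 1) * real n powr c * Sb"
    if T: "0 < T" and K: "n < K" for T K
  proof -
    define A1 where "A1 = Complex c' (-T)"
    define A2 where "A2 = Complex c (-T)"
    define A3 where "A3 = Complex c T"
    define A4 where "A4 = Complex c' T"
    have inH: "A1 \<in> H" "A2 \<in> H" "A3 \<in> H" "A4 \<in> H"
      using c by (auto simp: H_def A1_def A2_def A3_def A4_def)
    have "A4 - A1 = Complex 0 (2 * T)" by (simp add: A1_def A4_def complex_eq_iff)
    then have d41: "norm (A4 - A1) = 2 * T" using T by (simp add: cmod_Complex_0y)
    have "A3 - A4 = Complex (c - c') 0" by (simp add: A3_def A4_def complex_eq_iff)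
    then have d34: "norm (A3 - A4) = c - c'" using c by (simp add: cmod_Complex_x0)
    have "A2 - A1 = Complex (c - c') 0" by (simp add: A2_def A1_def complex_eq_iff)
    then have d21: "norm (A2 - A1) = c - c'" using c by (simp add: cmod_Complex_x0)
    have d32: "A3 - A2 = Complex 0 (2 * T)" by (simp add: A2_def A3_def complex_eq_iff)
    have n32: "norm (A3 - A2) = 2 * T" using T by (simp add: d32 cmod_Complex_0y)
    have Vp: "norm (G A4 - G A1) \<le> M * real n powr c' * (2 * T)"
    proof -
      have "norm (G A4 - G A1) \<le> M * real n powr c' * norm (A4 - A1)"
      proof (rule has_contour_integral_bound_linepath[OF cint[OF inH(1) inH(4)]])
        show "0 \<le> M * real n powr c'" using M0 by simp
        fix z assume "z \<in> closed_segment A1 A4"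
        then have "c' \<le> Re z \<and> Re z \<le> c'"
          by (rule Re_segment_bound) (auto simp: A1_def A4_def)
        then show "norm (\<phi> z) \<le> M * real n powr c'" using c by (intro \<phi>bound) auto
      qed
      then show ?thesis by (simp add: d41)
    qed
    have H1: "norm (G A3 - G A4) \<le> M * real n powr c * (c - c')"
    proof -
      have "norm (G A3 - G A4) \<le> M * real n powr c * norm (A3 - A4)"
      proof (rule has_contour_integral_bound_linepath[OF cint[OF inH(4) inH(3)]])
        show "0 \<le> M * real n powr c" using M0 by simp
        fix z assume "z \<in> closed_segment A4 A3"
        then have "c' \<le> Re z \<and> Re z \<le> c"
          by (rule Re_segment_bound) (use c in \<open>auto simp: A3_def A4_def\<close>)
        then show "norm (\<phi> z) \<le> M * real n powr c" using c by (intro \<phi>bound) auto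
      qed
      then show ?thesis by (simp add: d34)
    qed
    have H2: "norm (G A2 - G A1) \<le> M * real n powr c * (c - c')"
    proof -
      have "norm (G A2 - G A1) \<le> M * real n powr c * norm (A2 - A1)"
      proof (rule has_contour_integral_bound_linepath[OF cint[OF inH(1) inH(2)]])
        show "0 \<le> M * real n powr c" using M0 by simp
        fix z assume "z \<in> closed_segment A1 A2"
        then have "c' \<le> Re z \<and> Re z \<le> c"
          by (rule Re_segment_bound) (use c in \<open>auto simp: A1_def A2_def\<close>)
        then show "norm (\<phi> z) \<le> M * real n powr c" using c by (intro \<phi>bound) auto
      qed
      then show ?thesis by (simp add: d21)
    qed
    define V where "V = G A3 - G A2"
    have V: "norm V \<le> M * real n powr c' * (2 * T) + 2 * (M * real n powr c * (c - c'))"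
    proof -
      have "V = (G A4 - G A1) + (G A3 - G A4) - (G A2 - G A1)" by (simp add: V_def)
      then have "norm V \<le> norm (G A4 - G A1) + norm (G A3 - G A4) + norm (G A2 - G A1)"
        by (simp only: norm3a)
      then show ?thesis using Vp H1 H2 by linarith
    qed
    define P where "P s = (\<Sum>m<K. pr m s)" for s
    define Q where "Q s = (\<Sum>m<K. t m s)" for s
    have PQ: "(Q has_contour_integral (P A3 - P A2)) (linepath A2 A3)"
    proof -
      have "(Q has_contour_integral (P (pathfinish (linepath A2 A3)) - P (pathstart (linepath A2 A3)))) (linepath A2 A3)"
      proof (rule contour_integral_primitive[where S = UNIV])
        fix x :: complex
        show "(P has_field_derivative Q x) (at x within UNIV)"
          unfolding P_def Q_def by (rule DERIV_sum) (use prd in auto)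
      qed auto
      then show ?thesis by simp
    qed
    have RV: "((\<lambda>s. \<phi> s - Q s) has_contour_integral (V - (P A3 - P A2))) (linepath A2 A3)"
      unfolding V_def by (rule has_contour_integral_diff[OF cint[OF inH(2) inH(3)] PQ])
    have Rb: "norm (V - (P A3 - P A2)) \<le> real n powr c * tail K * (2 * T)"
    proof -
      have "norm (V - (P A3 - P A2)) \<le> real n powr c * tail K * norm (A3 - A2)"
      proof (rule has_contour_integral_bound_linepath[OF RV])
        show "0 \<le> real n powr c * tail K"
          using tail0[of K] by simp
        fix z assume "z \<in> closed_segment A2 A3"
        then have "c \<le> Re z \<and> Re z \<le> c"
          by (rule Re_segment_bound) (auto simp: A2_def A3_def)
        then have zc: "Re z = c" by simp
        have st: "summable (\<lambda>m. norm (t m z))"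
          using s\<beta> by (simp add: tnorm[OF zc] summable_mult2)
        have "\<phi> z - Q z = (\<Sum>i. t (i + K) z)"
          using suminf_split_initial_segment[OF summable_norm_cancel[OF st], of K]
          by (simp add: tsum[OF zc] Q_def)
        also have "norm \<dots> \<le> (\<Sum>i. norm (t (i + K) z))"
          by (rule summable_norm) (use summable_iff_shift[of "\<lambda>m. norm (t m z)" K] st in simp)
        also have "\<dots> = (\<Sum>i. \<beta> (i + K) * real n powr c)"
          by (simp add: tnorm[OF zc])
        also have "\<dots> = real n powr c * tail K"
          unfolding tail_def using suminf_mult2[OF sshift[of K], of "real n powr c"]
          by (simp add: mult.commute)
        finally show "norm (\<phi> z - Q z) \<le> real n powr c * tail K" .
      qed
      then show ?thesis by (simp add: n32)
    qed
    have Ln: "lam n = 0" by (simp add: L_def lam_def)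
    have prn: "pr n A3 - pr n A2 = b n * Complex 0 (2 * T)"
      by (simp add: pr_def Ln d32 right_diff_distrib[symmetric])
    have rest: "norm (pr m A3 - pr m A2) \<le> 2 * (real n + 1) * real n powr c * \<beta> m" if "m \<noteq> n" for m
    proof (cases "b m = 0")
      case True then show ?thesis by (simp add: pr_def t_def \<beta>_def)
    next
      case False
      then have m0: "0 < m" using b0 by (cases m) auto
      define lm where "lm = lam m"
      have lb: "1 / (real n + 1) \<le> \<bar>lm\<bar>"
        using lam_bound[OF m0 n that] by (simp add: lm_def L_def lam_def)
      have lpos: "0 < \<bar>lm\<bar>" using lb by (smt (verit) divide_pos_pos of_nat_0_le_iff)
      then have "lm \<noteq> 0" by simp
      then have "pr m A3 - pr m A2 = (t m A3 - t m A2) / of_real lm"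
        by (simp add: pr_def lm_def diff_divide_distrib)
      then have "norm (pr m A3 - pr m A2) = norm (t m A3 - t m A2) / \<bar>lm\<bar>"
        by (simp add: norm_divide)
      also have "\<dots> \<le> (norm (t m A3) + norm (t m A2)) * (real n + 1)"
      proof -
        have "1 / \<bar>lm\<bar> \<le> real n + 1"
          using lb lpos by (simp add: field_simps)
        then have "norm (t m A3 - t m A2) * (1 / \<bar>lm\<bar>) \<le> (norm (t m A3) + norm (t m A2)) * (real n + 1)"
          by (intro mult_mono norm_triangle_ineq4) auto
        then show ?thesis by simp
      qed
      also have "\<dots> = 2 * (real n + 1) * real n powr c * \<beta> m"
        by (simp add: tnorm A2_def A3_def)
      finally show ?thesis .
    qed
    have nK: "n \<in> {..<K}" using K by simp
    have "P A3 - P A2 = (pr n A3 - pr n A2) + (\<Sum>m\<in>{..<K} - {n}. pr m A3 - pr m A2)"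
      unfolding P_def sum_subtractf[symmetric] by (rule sum.remove[OF _ nK]) simp
    then have bn: "b n * Complex 0 (2 * T) = (P A3 - P A2) - (\<Sum>m\<in>{..<K} - {n}. pr m A3 - pr m A2)"
      by (simp add: prn)
    have restsum: "norm (\<Sum>m\<in>{..<K} - {n}. pr m A3 - pr m A2) \<le> 2 * (real n + 1) * real n powr c * Sb"
    proof -
      have "norm (\<Sum>m\<in>{..<K} - {n}. pr m A3 - pr m A2) \<le> (\<Sum>m\<in>{..<K} - {n}. norm (pr m A3 - pr m A2))"
        by (rule norm_sum)
      also have "\<dots> \<le> (\<Sum>m\<in>{..<K} - {n}. 2 * (real n + 1) * real n powr c * \<beta> m)"
        by (rule sum_mono) (use rest in auto)
      also have "\<dots> = 2 * (real n + 1) * real n powr c * (\<Sum>m\<in>{..<K} - {n}. \<beta> m)"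
        by (simp add: sum_distrib_left)
      also have "\<dots> \<le> 2 * (real n + 1) * real n powr c * Sb"
      proof (rule mult_left_mono)
        have "(\<Sum>m\<in>{..<K} - {n}. \<beta> m) \<le> (\<Sum>m\<in>{..<K}. \<beta> m)"
          by (rule sum_mono2) (use \<beta>0 in auto)
        also have "\<dots> \<le> Sb" unfolding Sb_def by (rule sum_le_suminf[OF s\<beta>]) (use \<beta>0 in auto)
        finally show "(\<Sum>m\<in>{..<K} - {n}. \<beta> m) \<le> Sb" .
      qed simp
      finally show ?thesis .
    qed
    have "cmod (b n) * (2 * T) = norm (b n * Complex 0 (2 * T))"
      using T by (simp add: norm_mult cmod_Complex_0y)
    also have "\<dots> \<le> norm V + norm (V - (P A3 - P A2)) + norm (\<Sum>m\<in>{..<K} - {n}. pr m A3 - pr m A2)"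
    proof -
      have "b n * Complex 0 (2 * T) = V - (V - (P A3 - P A2)) - (\<Sum>m\<in>{..<K} - {n}. pr m A3 - pr m A2)"
        by (simp add: bn)
      then show ?thesis
        by (simp only: norm3b)
    qed
    finally show ?thesis using V Rb restsum by (simp add: algebra_simps)
  qed
  show ?thesis
  proof (rule field_le_epsilon)
    fix e :: real assume e: "0 < e"
    define C where "C = 2 * (M * real n powr c * (c - c')) + 2 * (real n + 1) * real n powr c * Sb"
    have "0 \<le> Sb" unfolding Sb_def by (rule suminf_nonneg[OF s\<beta> \<beta>0])
    then have C0: "0 \<le> C" unfolding C_def using M0 c by (intro add_nonneg_nonneg mult_nonneg_nonneg) auto
    have npc: "0 < real n powr c" using n by simp
    obtain K0 where K0: "\<And>K. K \<ge> K0 \<Longrightarrow> norm (\<Sum>i. \<beta> (i + K)) < e / 2 / real n powr c"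
      using suminf_exist_split[OF _ s\<beta>, of "e / 2 / real n powr c"] e npc by auto
    define K where "K = max K0 (n + 1)"
    have K: "n < K" "K0 \<le> K" by (auto simp: K_def)
    have tK: "real n powr c * tail K < e / 2"
    proof -
      have "tail K < e / 2 / real n powr c" using K0[OF K(2)] by (simp add: tail_def)
      then show ?thesis using npc by (simp add: field_simps)
    qed
    define T where "T = 2 * (C + 1) / e"
    have T: "0 < T" using C0 e by (simp add: T_def)
    have CT: "C / (2 * T) < e / 2"
      using C0 e by (simp add: T_def field_simps add_pos_nonneg)
    have "cmod (b n) * (2 * T) \<le> 2 * T * (M * real n powr c') + C + real n powr c * tail K * (2 * T)"
      using key[OF T K(1)] by (simp add: C_def algebra_simps)
    then have "cmod (b n) \<le> M * real n powr c' + C / (2 * T) + real n powr c * tail K"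
      using T by (simp add: field_simps)
    then show "cmod (b n) \<le> M * real n powr c' + e" using CT tK by linarith
  qed
qed


lemma Hinf_coeff_bound:
  assumes "Hinf b"
  obtains M where "0 \<le> M" "\<And>n c'. 0 < c' \<Longrightarrow> cmod (b n) \<le> M * real n powr c'"
proof -
  from assms obtain F \<sigma> where b0: "b 0 = 0" and holF: "F holomorphic_on {s. 0 < Re s}"
    and bd: "bounded (F ` {s. 0 < Re s})"
    and hs: "\<And>s. \<sigma> < Re s \<Longrightarrow> summable (\<lambda>n. cmod (b n * of_nat n powr (-s))) \<and> F s = dirichlet_eval b s"
    unfolding Hinf_def by blast
  obtain M where M0: "0 < M" and M: "\<And>x. x \<in> F ` {s. 0 < Re s} \<Longrightarrow> norm x \<le> M"
    using bd by (auto simp: bounded_pos)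
  have "cmod (b n) \<le> M * real n powr c'" if c': "0 < c'" for n c'
  proof (cases "n = 0")
    case True then show ?thesis by (simp add: b0)
  next
    case False
    show ?thesis
    proof (rule coeff_bound_aux[OF holF _ _ c', where c = "max \<sigma> c' + 1"])
      show "\<And>s. 0 < Re s \<Longrightarrow> norm (F s) \<le> M" using M by auto
      show "0 \<le> M" using M0 by simp
      show "c' < max \<sigma> c' + 1" by simp
      show "\<And>s. Re s = max \<sigma> c' + 1 \<Longrightarrow> summable (\<lambda>m. cmod (b m * of_nat m powr (-s))) \<and> F s = dirichlet_eval b s"
        by (rule hs) simp
      show "b 0 = 0" by (rule b0)
      show "0 < n" using False by simp
    qed
  qed
  then show ?thesis using that M0 by (meson less_imp_le)
qed

lemma delta1_H2: "H2 (\<lambda>n. if n = 1 then 1 else 0)"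
  unfolding H2_def by (auto intro!: summable_finite[of "{1}"] split: if_split_asm)

lemma part1:
  assumes "cyclic_H2 a"
  shows "a 1 \<noteq> 0"
proof
  assume a1: "a 1 = 0"
  define f :: "nat \<Rightarrow> complex" where "f n = (if n = 1 then 1 else 0)" for n
  have "H2 f" unfolding f_def by (rule delta1_H2)
  then obtain b where sb: "summable (\<lambda>n. (cmod (f n - dconv b a n))\<^sup>2)"
    and lt: "(\<Sum>n. (cmod (f n - dconv b a n))\<^sup>2) < 1"
    using assms unfolding cyclic_H2_def by (meson zero_less_one)
  have "{d. d dvd (1::nat)} = {1}" by auto
  then have "dconv b a 1 = b 1 * a 1" by (simp add: dconv_def)
  then have "dconv b a 1 = 0" using a1 by (metis mult_zero_right)
  then have "(\<Sum>n\<in>{1}. (cmod (f n - dconv b a n))\<^sup>2) = 1" by (simp add: f_def)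
  moreover have "(\<Sum>n\<in>{1}. (cmod (f n - dconv b a n))\<^sup>2) \<le> (\<Sum>n. (cmod (f n - dconv b a n))\<^sup>2)"
    by (rule sum_le_suminf[OF sb]) auto
  ultimately show False using lt by simp
qed


lemma msk_0: "msk N a 0 = 0"
  by (simp add: msk_def smooth_def)

lemma msk_summable:
  assumes "summable (\<lambda>n. cmod (a n) * real n powr (-\<sigma>))"
  shows "summable (\<lambda>n. cmod (msk N a n) * real n powr (-\<sigma>))"
  by (rule summable_comparison_test'[OF assms]) (auto simp: msk_def)

lemma dir_msk_uniform:
  assumes sa: "summable (\<lambda>n. cmod (a n) * real n powr (-\<sigma>))" and a0: "a 0 = 0"
  shows "uniform_limit {s. \<sigma> \<le> Re s} (\<lambda>N. dirichlet_eval (msk N a)) (dirichlet_eval a) sequentially"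
proof (rule uniform_limitI)
  fix e :: real assume e: "0 < e"
  define \<gamma> where "\<gamma> n = cmod (a n) * real n powr (-\<sigma>)" for n
  have s\<gamma>: "summable \<gamma>" unfolding \<gamma>_def by (rule sa)
  obtain N0 where N0: "\<And>N. N \<ge> N0 \<Longrightarrow> norm (\<Sum>i. \<gamma> (i + N)) < e"
    using suminf_exist_split[OF e s\<gamma>] by blast
  show "\<forall>\<^sub>F N in sequentially. \<forall>z\<in>{s. \<sigma> \<le> Re s}. dist (dirichlet_eval (msk N a) z) (dirichlet_eval a z) < e"
  proof (rule eventually_sequentiallyI[of N0])
    fix N assume N: "N0 \<le> N"
    show "\<forall>z\<in>{s. \<sigma> \<le> Re s}. dist (dirichlet_eval (msk N a) z) (dirichlet_eval a z) < e"
    proof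
      fix z assume z: "z \<in> {s. \<sigma> \<le> Re s}"
      define h where "h n = (a n - msk N a n) * of_nat n powr (-z)" for n
      have saz: "summable (\<lambda>n. cmod (a n * of_nat n powr (-z)))"
        using dir_summable_mono[OF sa] z by simp
      have smz: "summable (\<lambda>n. cmod (msk N a n * of_nat n powr (-z)))"
        using dir_summable_mono[OF msk_summable[OF sa]] z by simp
      have "dirichlet_eval a z - dirichlet_eval (msk N a) z =
          (\<Sum>n. a n * of_nat n powr (-z) - msk N a n * of_nat n powr (-z))"
        unfolding dirichlet_eval_def
        by (rule suminf_diff) (rule summable_norm_cancel, use saz smz in simp)+
      moreover have "h = (\<lambda>n. a n * of_nat n powr (-z) - msk N a n * of_nat n powr (-z))"
        by (rule ext) (simp add: h_def left_diff_distrib)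
      ultimately have diff: "dirichlet_eval a z - dirichlet_eval (msk N a) z = suminf h"
        by simp
      have hz: "h n = 0" if "n < Suc N" for n
      proof (cases "n = 0")
        case True then show ?thesis by (simp add: h_def a0 msk_0)
      next
        case False
        then have "n \<in> smooth N" using that by (intro smooth_le) auto
        then show ?thesis by (simp add: h_def msk_def)
      qed
      have hnorm: "norm (h n) \<le> \<gamma> n" for n
      proof -
        have "cmod (a n - msk N a n) \<le> cmod (a n)" by (simp add: msk_def)
        moreover have "real n powr (- Re z) \<le> real n powr (-\<sigma>)" using z rpow_mono_nat by simp
        ultimately show ?thesis
          by (simp add: h_def \<gamma>_def norm_mult npow_norm mult_mono)
      qed
      have sh: "summable (\<lambda>n. norm (h n))"
        by (rule summable_comparison_test'[OF s\<gamma>]) (use hnorm in simp)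
      have shs: "summable (\<lambda>i. norm (h (i + Suc N)))"
        using summable_iff_shift[of "\<lambda>n. norm (h n)" "Suc N"] sh by simp
      have "suminf h = (\<Sum>i. h (i + Suc N))"
        using suminf_split_initial_segment[OF summable_norm_cancel[OF sh], of "Suc N"] hz by simp
      then have "norm (suminf h) \<le> (\<Sum>i. norm (h (i + Suc N)))"
        using summable_norm[OF shs] by simp
      also have "\<dots> \<le> (\<Sum>i. \<gamma> (i + Suc N))"
        by (rule suminf_le[OF _ shs]) (use hnorm s\<gamma> summable_iff_shift[of \<gamma> "Suc N"] in auto)
      also have "\<dots> < e" using N0[of "Suc N"] N by (simp add: \<gamma>_def)
      finally have "norm (suminf h) < e" .
      then show "dist (dirichlet_eval (msk N a) z) (dirichlet_eval a z) < e"
        using diff by (simp add: dist_norm norm_minus_commute)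
    qed
  qed
qed

lemma dir_nonzero_somewhere:
  assumes sa: "summable (\<lambda>n. cmod (a n) * real n powr (-\<sigma>))" and a0: "a 0 = 0" and a1: "a 1 \<noteq> 0"
  shows "\<exists>x. \<sigma> < Re x \<and> dirichlet_eval a x \<noteq> 0"
proof -
  define \<gamma> where "\<gamma> n = cmod (a n) * real n powr (-\<sigma>)" for n
  have s\<gamma>: "summable \<gamma>" unfolding \<gamma>_def by (rule sa)
  have \<gamma>0: "0 \<le> \<gamma> n" for n by (simp add: \<gamma>_def)
  define \<Gamma> where "\<Gamma> = suminf \<gamma>"
  have \<Gamma>0: "0 \<le> \<Gamma>" unfolding \<Gamma>_def by (rule suminf_nonneg[OF s\<gamma> \<gamma>0])
  have pa1: "0 < cmod (a 1) / (\<Gamma> + 1)" using a1 \<Gamma>0 by simp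
  obtain k where k: "(1/2::real) ^ k < cmod (a 1) / (\<Gamma> + 1)"
    using real_arch_pow_inv[OF pa1, of "1/2"] by auto
  define t where "t = real k + 1"
  define x :: complex where "x = of_real (\<sigma> + t)"
  have xr: "Re x = \<sigma> + t" by (simp add: x_def)
  define c where "c n = a n * of_nat n powr (-x)" for n
  have cnorm: "norm (c n) = \<gamma> n * real n powr (- t)" for n
    by (simp add: c_def \<gamma>_def norm_mult npow_norm xr powr_add[symmetric])
  have sc: "summable (\<lambda>n. norm (c n))"
    using dir_summable_mono[OF sa, of x] xr t_def by (simp add: c_def)
  have sc2: "summable (\<lambda>i. norm (c (i + 2)))"
    using summable_iff_shift[of "\<lambda>n. norm (c n)" 2] sc by simp
  have c2: "norm (c (i + 2)) \<le> \<gamma> (i + 2) * (1/2) ^ k" for i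
  proof -
    have "real (i + 2) powr (- t) \<le> real (i + 2) powr (- real k)"
      unfolding t_def by (rule powr_mono) auto
    also have "\<dots> \<le> 2 powr (- real k)"
      by (rule powr_mono2') auto
    also have "\<dots> = 1 / 2 powr (real k)" by (rule powr_minus_divide)
    also have "\<dots> = 1 / 2 ^ k" by (simp add: powr_realpow)
    also have "\<dots> = (1/2) ^ k" by (rule power_one_over[symmetric])
    finally show ?thesis unfolding cnorm by (intro mult_left_mono \<gamma>0)
  qed
  have "dirichlet_eval a x = (\<Sum>i. c (i + 2)) + (c 0 + c 1)"
    unfolding dirichlet_eval_def c_def[symmetric]
    using suminf_split_initial_segment[OF summable_norm_cancel[OF sc], of 2]
    by (simp add: numeral_2_eq_2)
  also have "c 0 + c 1 = a 1" by (simp add: c_def a0)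
  finally have Dx: "dirichlet_eval a x = (\<Sum>i. c (i + 2)) + a 1" .
  have "norm (\<Sum>i. c (i + 2)) \<le> (\<Sum>i. norm (c (i + 2)))" by (rule summable_norm[OF sc2])
  also have "\<dots> \<le> (\<Sum>i. \<gamma> (i + 2) * (1/2) ^ k)"
    by (rule suminf_le[OF c2 sc2]) (use s\<gamma> summable_iff_shift[of \<gamma> 2] in \<open>auto intro: summable_mult2\<close>)
  also have "\<dots> = (\<Sum>i. \<gamma> (i + 2)) * (1/2) ^ k"
    by (rule suminf_mult2[symmetric]) (use s\<gamma> summable_iff_shift[of \<gamma> 2] in auto)
  also have "\<dots> \<le> \<Gamma> * (1/2) ^ k"
  proof (rule mult_right_mono)
    have "\<Gamma> = (\<Sum>i. \<gamma> (i + 2)) + sum \<gamma> {..<2}"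
      unfolding \<Gamma>_def by (rule suminf_split_initial_segment[OF s\<gamma>])
    moreover have "0 \<le> sum \<gamma> {..<2}" by (rule sum_nonneg) (use \<gamma>0 in auto)
    ultimately show "(\<Sum>i. \<gamma> (i + 2)) \<le> \<Gamma>" by linarith
  qed simp
  also have "\<dots> < cmod (a 1)"
  proof -
    have "\<Gamma> * (1/2) ^ k \<le> (\<Gamma> + 1) * (1/2) ^ k" by (simp add: mult_right_mono)
    also have "\<dots> < (\<Gamma> + 1) * (cmod (a 1) / (\<Gamma> + 1))"
      using k \<Gamma>0 by (intro mult_strict_left_mono) auto
    also have "\<dots> = cmod (a 1)" using \<Gamma>0 by simp
    finally show ?thesis .
  qed
  finally have "norm (\<Sum>i. c (i + 2)) < cmod (a 1)" .
  then have "dirichlet_eval a x \<noteq> 0"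
    unfolding Dx by (metis add.commute add_eq_0_iff norm_minus_cancel order_less_irrefl)
  moreover have "\<sigma> < Re x" using xr t_def by simp
  ultimately show ?thesis by blast
qed


lemma exists_smooth_zero:
  assumes sa: "summable (\<lambda>n. cmod (a n) * real n powr (-\<sigma>))" and a0: "a 0 = 0" and a1: "a 1 \<noteq> 0"
    and s: "\<sigma> < Re s" and Ds: "dirichlet_eval a s = 0"
  shows "\<exists>N z. \<sigma> < Re z \<and> dirichlet_eval (msk N a) z = 0"
proof (rule ccontr)
  assume "\<not> ?thesis"
  then have nz: "\<And>N z. z \<in> {s. \<sigma> < Re s} \<Longrightarrow> dirichlet_eval (msk N a) z \<noteq> 0" by auto
  have "dirichlet_eval a s \<noteq> 0"
  proof (rule Hurwitz_no_zeros[of "{s. \<sigma> < Re s}" "\<lambda>N. dirichlet_eval (msk N a)" "dirichlet_eval a"])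
    show "open {s. \<sigma> < Re s}" by (simp add: open_halfspace_Re_gt)
    show "connected {s. \<sigma> < Re s}" by (rule convex_connected) (simp add: convex_halfspace_Re_gt)
    show "dirichlet_eval (msk N a) holomorphic_on {s. \<sigma> < Re s}" for N
      by (rule dir_holo[OF msk_summable[OF sa]])
    show "dirichlet_eval a holomorphic_on {s. \<sigma> < Re s}" by (rule dir_holo[OF sa])
    show "uniform_limit K (\<lambda>N. dirichlet_eval (msk N a)) (dirichlet_eval a) sequentially"
      if "compact K" "K \<subseteq> {s. \<sigma> < Re s}" for K
      by (rule uniform_limit_on_subset[OF dir_msk_uniform[OF sa a0]]) (use that in auto)
    show "\<not> dirichlet_eval a constant_on {s. \<sigma> < Re s}"
    proof
      assume "dirichlet_eval a constant_on {s. \<sigma> < Re s}"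
      then obtain y where y: "\<And>x. x \<in> {s. \<sigma> < Re s} \<Longrightarrow> dirichlet_eval a x = y"
        unfolding constant_on_def by blast
      have "y = 0" using y[of s] s Ds by simp
      moreover obtain x where "\<sigma> < Re x" "dirichlet_eval a x \<noteq> 0"
        using dir_nonzero_somewhere[OF sa a0 a1] by blast
      ultimately show False using y[of x] by simp
    qed
    show "\<And>N z. z \<in> {s. \<sigma> < Re s} \<Longrightarrow> dirichlet_eval (msk N a) z \<noteq> 0" by (rule nz)
    show "s \<in> {s. \<sigma> < Re s}" using s by simp
  qed
  then show False using Ds by simp
qed

lemma amgm_aux:
  fixes A B W :: real
  assumes "0 < W"
  shows "A * B \<le> W / 2 * A\<^sup>2 + B\<^sup>2 / (2 * W)"
proof -
  have "0 \<le> (A * W - B)\<^sup>2" by simp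
  then have "0 \<le> A\<^sup>2 * W\<^sup>2 - 2 * A * B * W + B\<^sup>2" by (simp add: power2_eq_square algebra_simps)
  then have "2 * A * B * W \<le> A\<^sup>2 * W\<^sup>2 + B\<^sup>2" by linarith
  then have "A * B \<le> (A\<^sup>2 * W\<^sup>2 + B\<^sup>2) / (2 * W)" using assms by (simp add: field_simps)
  also have "\<dots> = W / 2 * A\<^sup>2 + B\<^sup>2 / (2 * W)" using assms by (simp add: field_simps power2_eq_square)
  finally show ?thesis .
qed

lemma part2_contra:
  assumes cyc: "cyclic_H2 a" and a0: "a 0 = 0"
    and sa: "summable (\<lambda>n. cmod (a n) * real n powr (-\<sigma>))" and \<sigma>0: "0 < \<sigma>"
    and z: "\<sigma> < Re z" and Dz: "dirichlet_eval (msk N a) z = 0"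
  shows False
proof -
  define x where "x = Re z"
  have x0: "0 < x" using z \<sigma>0 by (simp add: x_def)
  define w where "w n = (if n \<in> smooth N then real n powr (- (2 * x)) else 0)" for n
  have sw: "summable w" unfolding w_def by (rule smooth_summable) (use x0 in simp)
  have w0: "0 \<le> w n" for n by (simp add: w_def)
  define W where "W = suminf w"
  have "w 1 = 1" using one_smooth[of N] by (simp add: w_def)
  moreover have "sum w {1} \<le> W" unfolding W_def by (rule sum_le_suminf[OF sw]) (use w0 in auto)
  ultimately have W1: "1 \<le> W" by simp
  then have Wp: "0 < W" by simp
  define f :: "nat \<Rightarrow> complex" where "f n = (if n = 1 then 1 else 0)" for n
  have "H2 f" unfolding f_def by (rule delta1_H2)
  then obtain b where hb: "Hinf b" and sg: "summable (\<lambda>n. (cmod (f n - dconv b a n))\<^sup>2)"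
    and lt: "(\<Sum>n. (cmod (f n - dconv b a n))\<^sup>2) < 1 / W"
    using cyc Wp unfolding cyclic_H2_def by (meson divide_pos_pos zero_less_one)
  obtain Mb where Mb0: "0 \<le> Mb" and Mb: "\<And>n c'. 0 < c' \<Longrightarrow> cmod (b n) \<le> Mb * real n powr c'"
    using Hinf_coeff_bound[OF hb] by blast
  define bN where "bN = msk N b"
  define aN where "aN = msk N a"
  have sbN: "summable (\<lambda>n. cmod (bN n * of_nat n powr (-z)))"
  proof (rule summable_comparison_test'[where g = "\<lambda>n. Mb * (if n \<in> smooth N then real n powr (- (x / 2)) else 0)"])
    show "summable (\<lambda>n. Mb * (if n \<in> smooth N then real n powr (- (x / 2)) else 0))"
      by (rule summable_mult, rule smooth_summable) (use x0 in simp)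
    fix n
    show "norm (cmod (bN n * of_nat n powr (-z))) \<le> Mb * (if n \<in> smooth N then real n powr (- (x / 2)) else 0)"
    proof (cases "n \<in> smooth N")
      case True
      then have n0: "0 < n" by (simp add: smooth_def)
      have "norm (cmod (bN n * of_nat n powr (-z))) = cmod (b n) * real n powr (- x)"
        using True by (simp add: bN_def msk_def norm_mult npow_norm x_def)
      also have "\<dots> \<le> Mb * real n powr (x / 2) * real n powr (- x)"
        using Mb[of "x / 2" n] x0 by (intro mult_right_mono) auto
      also have "\<dots> = Mb * real n powr (- (x / 2))"
        using n0 by (simp add: mult.assoc powr_add[symmetric])
      finally show ?thesis using True by simp
    next
      case False then show ?thesis by (simp add: bN_def msk_def)
    qed
  qed
  have saN: "summable (\<lambda>n. cmod (aN n * of_nat n powr (-z)))"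
    unfolding aN_def by (rule dir_summable_mono[OF msk_summable[OF sa]]) (use z in simp)
  have mult: "summable (\<lambda>n. cmod (dconv bN aN n * of_nat n powr (-z)))"
    "dirichlet_eval (dconv bN aN) z = dirichlet_eval bN z * dirichlet_eval aN z"
    using dir_mult[OF _ _ sbN saN] by (simp_all add: bN_def aN_def msk_0)
  have dc: "dconv bN aN = msk N (dconv b a)" by (simp add: bN_def aN_def dconv_msk)
  have E0: "dirichlet_eval (msk N (dconv b a)) z = 0"
    using mult(2)[unfolded dc] Dz by (simp add: aN_def)
  have sM: "summable (\<lambda>n. cmod (msk N (dconv b a) n * of_nat n powr (-z)))"
    using mult(1)[unfolded dc] .
  define g where "g n = f n - dconv b a n" for n
  have mg: "msk N g n = f n - msk N (dconv b a) n" for n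
  proof (cases "n \<in> smooth N")
    case True then show ?thesis by (simp add: msk_def g_def)
  next
    case False
    then have "n \<noteq> 1" using one_smooth by auto
    then show ?thesis using False by (simp add: msk_def g_def f_def)
  qed
  define e where "e n = msk N g n * of_nat n powr (-z)" for n
  have ebound: "norm (e n) \<le> W / 2 * (cmod (g n))\<^sup>2 + w n / (2 * W)" for n
  proof (cases "n \<in> smooth N")
    case True
    then have n0: "0 < n" by (simp add: smooth_def)
    have "norm (e n) = cmod (g n) * real n powr (- x)"
      using True by (simp add: e_def msk_def norm_mult npow_norm x_def)
    also have "\<dots> \<le> W / 2 * (cmod (g n))\<^sup>2 + (real n powr (- x))\<^sup>2 / (2 * W)"
      by (rule amgm_aux[OF Wp])
    also have "(real n powr (- x))\<^sup>2 = w n"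
      using True n0 by (simp add: w_def power2_eq_square powr_add[symmetric])
    finally show ?thesis .
  next
    case False
    then have "norm (e n) = 0" by (simp add: e_def msk_def)
    moreover have "0 \<le> W / 2 * (cmod (g n))\<^sup>2 + w n / (2 * W)" using Wp w0[of n] by simp
    ultimately show ?thesis by simp
  qed
  have sg': "summable (\<lambda>n. (cmod (g n))\<^sup>2)" using sg by (simp add: g_def)
  have sR: "summable (\<lambda>n. W / 2 * (cmod (g n))\<^sup>2 + w n / (2 * W))"
    by (intro summable_add summable_mult summable_divide sg' sw)
  have se: "summable (\<lambda>n. norm (e n))"
    by (rule summable_comparison_test'[OF sR]) (use ebound in simp)
  have "(\<Sum>n. norm (e n)) \<le> (\<Sum>n. W / 2 * (cmod (g n))\<^sup>2 + w n / (2 * W))"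
    by (rule suminf_le[OF ebound se sR])
  also have "\<dots> = W / 2 * (\<Sum>n. (cmod (g n))\<^sup>2) + W / (2 * W)"
  proof -
    have s1: "(\<Sum>n. W / 2 * (cmod (g n))\<^sup>2) = W / 2 * (\<Sum>n. (cmod (g n))\<^sup>2)"
      by (rule suminf_mult[OF sg'])
    have s2: "(\<Sum>n. w n / (2 * W)) = W / (2 * W)"
      unfolding W_def by (rule suminf_divide[OF sw])
    have "(\<Sum>n. W / 2 * (cmod (g n))\<^sup>2 + w n / (2 * W)) =
        (\<Sum>n. W / 2 * (cmod (g n))\<^sup>2) + (\<Sum>n. w n / (2 * W))"
      by (rule suminf_add[symmetric]) (intro summable_mult sg', intro summable_divide sw)
    then show ?thesis using s1 s2 by simp
  qed
  also have "\<dots> < W / 2 * (1 / W) + 1 / 2"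
  proof -
    have "(\<Sum>n. (cmod (g n))\<^sup>2) < 1 / W" using lt by (simp add: g_def)
    then have "W / 2 * (\<Sum>n. (cmod (g n))\<^sup>2) < W / 2 * (1 / W)" using Wp by (intro mult_strict_left_mono) auto
    moreover have "W / (2 * W) = 1 / 2" using Wp by simp
    ultimately show ?thesis by linarith
  qed
  also have "\<dots> = 1" using Wp by simp
  finally have lt1: "(\<Sum>n. norm (e n)) < 1" .
  have sf: "summable (\<lambda>n. f n * of_nat n powr (-z))"
    by (rule summable_finite[of "{1}"]) (auto simp: f_def)
  have f1: "(\<Sum>n. f n * of_nat n powr (-z)) = 1"
    by (subst suminf_finite[of "{1}"]) (auto simp: f_def)
  have "(\<Sum>n. e n) = (\<Sum>n. f n * of_nat n powr (-z)) - (\<Sum>n. msk N (dconv b a) n * of_nat n powr (-z))"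
    unfolding e_def mg left_diff_distrib
    by (rule suminf_diff[symmetric, OF sf summable_norm_cancel[OF sM]])
  also have "\<dots> = 1" using f1 E0 by (simp add: dirichlet_eval_def)
  finally have "(\<Sum>n. e n) = 1" .
  moreover have "norm (\<Sum>n. e n) \<le> (\<Sum>n. norm (e n))" by (rule summable_norm[OF se])
  ultimately show False using lt1 by simp
qed

theorem proposition2p9:
  fixes a :: "nat \<Rightarrow> complex"
  assumes "H2 a" and "cyclic_H2 a"
  shows "a 1 \<noteq> 0 \<and>
    (\<forall>s. ereal (Re s) > max (abscissa_abs a) 0 \<longrightarrow> dirichlet_eval a s \<noteq> 0)"
proof (intro conjI allI impI)
  show a1: "a 1 \<noteq> 0" by (rule part1[OF assms(2)])
  have a0: "a 0 = 0" using assms(1) by (simp add: H2_def)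
  fix s assume "ereal (Re s) > max (abscissa_abs a) 0"
  then have h1: "abscissa_abs a < ereal (Re s)" and h2: "0 < Re s" by auto
  from h1 obtain \<sigma>1 where s1: "summable (\<lambda>n. cmod (a n) * real n powr (- \<sigma>1))" and "\<sigma>1 < Re s"
    unfolding abscissa_abs_def by (auto simp: Inf_less_iff)
  define \<sigma> where "\<sigma> = (max \<sigma>1 0 + Re s) / 2"
  have \<sigma>: "0 < \<sigma>" "\<sigma> < Re s" "\<sigma>1 \<le> \<sigma>" using \<open>\<sigma>1 < Re s\<close> h2 by (auto simp: \<sigma>_def)
  have sa: "summable (\<lambda>n. cmod (a n) * real n powr (- \<sigma>))"
    by (rule summable_comparison_test'[OF s1]) (use rpow_mono_nat[OF \<sigma>(3)] in \<open>auto intro: mult_left_mono\<close>)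
  show "dirichlet_eval a s \<noteq> 0"
  proof
    assume Ds: "dirichlet_eval a s = 0"
    obtain N z where "\<sigma> < Re z" "dirichlet_eval (msk N a) z = 0"
      using exists_smooth_zero[OF sa a0 a1 \<sigma>(2) Ds] by blast
    then show False using part2_contra[OF assms(2) a0 sa \<sigma>(1)] by blast
  qed
qed

end
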